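(* Fix $s>2$ and $\mu^*>0$. Then for every $\mu_1>\mu^*$ there exist $\delta>0$ and a relatively open neighborhood $U\subset\mathcal{C}_{[\mu^*,\mu_1]}$ of $(\Delta\times[\mu^*,\mu_1])\cap\mathcal{C}_{[\mu^*,\mu_1]}$ such that $d\theta(f_{s,\mu}(\mathbf{x}))\ge\delta$ for all $(\mathbf{x},\mu)\in U\setminus(\Delta\times[\mu^*,\mu_1])$.
   Context: $f_{s,\mu}$ is the repressilator vector field $\dot x=\frac{\mu}{1+y^s}-x$, $\dot y=\frac{\mu}{1+z^s}-y$, $\dot z=\frac{\mu}{1+x^s}-z$ on $\mathbb{R}^3_+$. For $\mu\ge0$, $K_\mu:=\{(x,y,z)\colon\frac{\mu}{2+\mu^s}\le x,y,z\le\mu\}$; $\mathcal{C}:=\{(\mathbf{x},\mu)\in\mathbb{R}^3\times\mathbb{R}\colon\mu\ge0,\ \mathbf{x}\in K_\mu\}$ and $\mathcal{C}_J:=\mathcal{C}\cap(\mathbb{R}^3\times J)$. $\Delta:=\mathrm{span}\{(1,1,1)\}$; $\|\mathbf{x}_\perp\|^2=\tfrac23(x^2+y^2+z^2-xy-yz-zx)$ is the squared distance to $\Delta$; $d\theta:=\frac{1}{\sqrt3}\frac{(z-y)dx+(x-z)dy+(y-x)dz}{\|\mathbf{x}_\perp\|^2}$ on $\mathbb{R}^3\setminus\Delta$. *)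

theory Defs
  imports "HOL-Analysis.Analysis"
begin

type_synonym pt = "real \<times> real \<times> real"

definition repr_field :: "real \<Rightarrow> real \<Rightarrow> pt \<Rightarrow> pt" where
  "repr_field s \<mu> p = (case p of (x, y, z) \<Rightarrow>
     (\<mu> / (1 + y powr s) - x, \<mu> / (1 + z powr s) - y, \<mu> / (1 + x powr s) - z))"

definition Kset :: "real \<Rightarrow> real \<Rightarrow> pt set" where
  "Kset s \<mu> = {(x, y, z). \<mu> / (2 + \<mu> powr s) \<le> x \<and> x \<le> \<mu> \<and>
                           \<mu> / (2 + \<mu> powr s) \<le> y \<and> y \<le> \<mu> \<and>
                           \<mu> / (2 + \<mu> powr s) \<le> z \<and> z \<le> \<mu>}"

definition Cset :: "real \<Rightarrow> (pt \<times> real) set" where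
  "Cset s = {(p, \<mu>). \<mu> \<ge> 0 \<and> p \<in> Kset s \<mu>}"

definition CsetJ :: "real \<Rightarrow> real set \<Rightarrow> (pt \<times> real) set" where
  "CsetJ s J = Cset s \<inter> (UNIV \<times> J)"

definition diag :: "pt set" where
  "diag = {(x, y, z). x = y \<and> y = z}"

text \<open>Squared distance to the diagonal.\<close>
definition perp_sq :: "pt \<Rightarrow> real" where
  "perp_sq p = (case p of (x, y, z) \<Rightarrow> 2/3 * (x^2 + y^2 + z^2 - x*y - y*z - z*x))"

definition dtheta :: "pt \<Rightarrow> pt \<Rightarrow> real" where
  "dtheta p v = (case p of (x, y, z) \<Rightarrow> case v of (a, b, c) \<Rightarrow>
     (1 / sqrt 3) * ((z - y) * a + (x - z) * b + (y - x) * c) / perp_sq p)"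

end

theory Submission imports Defs begin

lemma mvt_pt:
  fixes g g' :: "real \<Rightarrow> real"
  assumes d: "\<And>t. t \<in> {a..b} \<Longrightarrow> (g has_real_derivative g' t) (at t)"
    and t: "t \<in> {a..b}" and u: "u \<in> {a..b}"
  shows "\<exists>\<xi>. min t u \<le> \<xi> \<and> \<xi> \<le> max t u \<and> g t - g u = (t - u) * g' \<xi>"
proof (cases "t = u")
  case True then show ?thesis by (intro exI[of _ t]) auto
next
  case False
  show ?thesis
  proof (cases "t < u")
    case True
    have "\<And>x. t \<le> x \<Longrightarrow> x \<le> u \<Longrightarrow> (g has_real_derivative g' x) (at x)"
      using d t u by auto
    from MVT2[OF True this] obtain z where "t < z" "z < u" "g u - g t = (u - t) * g' z" by blast
    then show ?thesis using True by (intro exI[of _ z]) (auto simp: algebra_simps)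
  next
    case False
    then have lt: "u < t" using \<open>t \<noteq> u\<close> by auto
    have "\<And>x. u \<le> x \<Longrightarrow> x \<le> t \<Longrightarrow> (g has_real_derivative g' x) (at x)"
      using d t u by auto
    from MVT2[OF lt this] obtain z where "u < z" "z < t" "g t - g u = (t - u) * g' z" by blast
    then show ?thesis using lt by (intro exI[of _ z]) (auto simp: algebra_simps)
  qed
qed

lemma aux: "2*(a::real) \<le> p + q \<Longrightarrow> q' = q \<Longrightarrow> 0 \<le> w \<Longrightarrow> a \<le> (q'+w+p)/2" by (simp add: field_simps)

lemma aux3: "0 < (a::real) \<Longrightarrow> 0 \<le> c \<Longrightarrow> 0 < (a + c)/2" by simp

lemma key:
  fixes g g' :: "real \<Rightarrow> real"
  assumes d: "\<And>t. t \<in> {a..b} \<Longrightarrow> (g has_real_derivative g' t) (at t)"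
    and Lpos: "L > 0" and Lb: "\<And>t. t \<in> {a..b} \<Longrightarrow> L \<le> - g' t"
    and uc: "\<And>t u. t \<in> {a..b} \<Longrightarrow> u \<in> {a..b} \<Longrightarrow> \<bar>t - u\<bar> < 2*r \<Longrightarrow> \<bar>g' t - g' u\<bar> \<le> L"
    and x: "x \<in> {a..b}" and y: "y \<in> {a..b}" and z: "z \<in> {a..b}"
    and r1: "\<bar>x - y\<bar> < r" and r2: "\<bar>y - z\<bar> < r" and r3: "\<bar>z - x\<bar> < r"
  shows "(z-y)*g y + (x-z)*g z + (y-x)*g x \<ge> L/2 * (x^2+y^2+z^2-x*y-y*z-z*x)"
proof -
  obtain \<xi>1 where h1: "min y x \<le> \<xi>1" "\<xi>1 \<le> max y x" "g y - g x = (y - x) * g' \<xi>1"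
    using mvt_pt[OF d y x] by blast
  obtain \<xi>2 where h2: "min z x \<le> \<xi>2" "\<xi>2 \<le> max z x" "g z - g x = (z - x) * g' \<xi>2"
    using mvt_pt[OF d z x] by blast
  obtain \<xi>3 where h3: "min y z \<le> \<xi>3" "\<xi>3 \<le> max y z" "g y - g z = (y - z) * g' \<xi>3"
    using mvt_pt[OF d y z] by blast
  have i1: "\<xi>1 \<in> {a..b}" "\<xi>2 \<in> {a..b}" "\<xi>3 \<in> {a..b}" using h1 h2 h3 x y z by auto
  have L1: "L \<le> - g' \<xi>1" "L \<le> - g' \<xi>2" "L \<le> - g' \<xi>3" using Lb i1 by auto
  have "\<bar>\<xi>1 - \<xi>2\<bar> < 2*r" using h1 h2 r1 r3 by (auto simp: abs_if min_def max_def split: if_splits)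
  then have D: "\<bar>g' \<xi>1 - g' \<xi>2\<bar> \<le> L" using uc i1 by auto
  define Q where "Q = x^2+y^2+z^2-x*y-y*z-z*x"
  define S where "S = -((x-y)*(g x - g y) + (y-z)*(g y - g z) + (z-x)*(g z - g x))/2"
  define A where "A = (z-x)*(g y - g x) + (x-y)*(g z - g x)"
  have N: "(z-y)*g y + (x-z)*g z + (y-x)*g x = S + A/2"
    unfolding S_def A_def by (simp add: field_simps)
  have S1: "S = ((x-y)^2 * (- g' \<xi>1) + (y-z)^2 * (- g' \<xi>3) + (z-x)^2 * (-g' \<xi>2))/2"
  proof -
    have e1: "g x - g y = (x-y) * g' \<xi>1" using h1(3) by (simp add: algebra_simps)
    have e3: "g y - g z = (y-z) * g' \<xi>3" using h3(3) by simp
    have e2: "g z - g x = (z-x) * g' \<xi>2" using h2(3) by simp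
    show ?thesis unfolding S_def e1 e2 e3 by (simp add: power2_eq_square algebra_simps)
  qed
  have "(x-y)^2 * L \<le> (x-y)^2 * (- g' \<xi>1)" using L1 by (intro mult_left_mono) auto
  moreover have "(y-z)^2 * L \<le> (y-z)^2 * (- g' \<xi>3)" using L1 by (intro mult_left_mono) auto
  moreover have "(z-x)^2 * L \<le> (z-x)^2 * (- g' \<xi>2)" using L1 by (intro mult_left_mono) auto
  moreover have Qe: "Q = ((x-y)^2 + (y-z)^2 + (z-x)^2)/2" unfolding Q_def by (simp add: power2_eq_square algebra_simps)
  ultimately have SQ: "S \<ge> L * Q" unfolding S1 by (simp add: algebra_simps)
  have A1: "A = (z-x)*(y-x)*(g' \<xi>1 - g' \<xi>2)"
    unfolding A_def h1(3) h2(3) by (simp add: algebra_simps)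
  have "\<bar>A\<bar> = \<bar>(z-x)*(y-x)\<bar> * \<bar>g' \<xi>1 - g' \<xi>2\<bar>" unfolding A1 by (simp add: abs_mult)
  also have "\<dots> \<le> \<bar>(z-x)*(y-x)\<bar> * L" using D by (intro mult_left_mono) auto
  also have "\<bar>(z-x)*(y-x)\<bar> \<le> Q"
  proof -
    have "2*\<bar>(z-x)*(y-x)\<bar> \<le> (z-x)^2 + (y-x)^2"
    proof -
      have "0 \<le> (\<bar>z-x\<bar> - \<bar>y-x\<bar>)^2" by simp
      then show ?thesis by (simp add: power2_diff abs_mult)
    qed
    moreover have "(x-y)^2 = (y-x)^2" by (simp add: power2_commute)
    moreover have "0 \<le> (y-z)^2" by simp
    ultimately show ?thesis unfolding Qe
      using aux[of "\<bar>(z-x)*(y-x)\<bar>" "(z-x)^2" "(y-x)^2" "(x-y)^2" "(y-z)^2"] by simp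
  qed
  then have "\<bar>(z-x)*(y-x)\<bar> * L \<le> Q * L" using Lpos by (intro mult_right_mono) auto
  finally have "\<bar>A\<bar> \<le> Q * L" .
  then show ?thesis unfolding N using SQ Q_def Lpos by (simp add: algebra_simps abs_le_iff)
qed

definition gg :: "real \<Rightarrow> real \<Rightarrow> real" where "gg s t = 1 / (1 + t powr s)"
definition gd :: "real \<Rightarrow> real \<Rightarrow> real" where "gd s t = - (s * t powr (s - 1)) / (1 + t powr s)^2"

lemma onep[simp]: "1 + (t::real) powr s \<noteq> 0"
  by (metis powr_ge_zero add_pos_nonneg zero_less_one less_irrefl)

lemma gg_deriv: "t > 0 \<Longrightarrow> (gg s has_real_derivative gd s t) (at t)"
  unfolding gg_def[abs_def] gd_def
  by (auto intro!: derivative_eq_intros simp: power2_eq_square add_pos_nonneg)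

lemma gd_cont: "a > 0 \<Longrightarrow> continuous_on {a..b} (gd s)"
  unfolding gd_def[abs_def]
  by (intro continuous_intros) (auto simp: add_pos_nonneg)

lemma gd_neg: "t > 0 \<Longrightarrow> s > 0 \<Longrightarrow> gd s t < 0"
  unfolding gd_def by (auto intro!: divide_pos_pos simp: add_pos_nonneg)

lemma open_T: "open {q :: pt \<times> real. \<bar>fst (fst q) - fst (snd (fst q))\<bar> < r \<and>
     \<bar>fst (snd (fst q)) - snd (snd (fst q))\<bar> < r \<and> \<bar>snd (snd (fst q)) - fst (fst q)\<bar> < r}"
  by (intro open_Collect_conj open_Collect_less continuous_intros)

lemma dtheta_eq:
  assumes "perp_sq (x,y,z) \<noteq> 0"
  shows "dtheta (x,y,z) (repr_field s \<mu> (x,y,z)) =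
     3 / (2 * sqrt 3) * (\<mu> * ((z-y)*gg s y + (x-z)*gg s z + (y-x)*gg s x)) / (x^2+y^2+z^2-x*y-y*z-z*x)"
proof -
  have e: "(z - y) * (\<mu> / (1 + y powr s) - x) + (x - z) * (\<mu> / (1 + z powr s) - y) + (y - x) * (\<mu> / (1 + x powr s) - z)
     = \<mu> * ((z-y)*gg s y + (x-z)*gg s z + (y-x)*gg s x)"
    unfolding gg_def by (simp add: algebra_simps)
  have f: "\<And>X Q::real. (1 / sqrt 3) * X / (2/3 * Q) = 3 / (2 * sqrt 3) * X / Q"
    by (simp add: divide_simps)
  show ?thesis unfolding dtheta_def repr_field_def perp_sq_def prod.case e f ..

qed

theorem lemma8:
  fixes s \<mu>s :: real
  assumes "s > 2" and "\<mu>s > 0"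
  shows "\<forall>\<mu>1 > \<mu>s. \<exists>\<delta> > 0. \<exists>U.
           openin (top_of_set (CsetJ s {\<mu>s..\<mu>1})) U \<and>
           (diag \<times> {\<mu>s..\<mu>1}) \<inter> CsetJ s {\<mu>s..\<mu>1} \<subseteq> U \<and>
           (\<forall>p \<mu>. (p, \<mu>) \<in> U - diag \<times> {\<mu>s..\<mu>1} \<longrightarrow>
                    dtheta p (repr_field s \<mu> p) \<ge> \<delta>)"
proof (intro allI impI)
  fix \<mu>1 assume m1: "\<mu>1 > \<mu>s"
  define a where "a = \<mu>s / (2 + \<mu>1 powr s)"
  define b where "b = \<mu>1"
  have apos: "a > 0" unfolding a_def using assms by (simp add: add_pos_nonneg)
  have ab: "a \<le> b"
  proof -
    have "a \<le> \<mu>s / 1" unfolding a_def using assms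
      by (intro divide_left_mono) (auto simp: add_pos_nonneg)
    then show ?thesis unfolding b_def using m1 by simp
  qed
  obtain t0 where t0: "t0 \<in> {a..b}" "\<And>t. t \<in> {a..b} \<Longrightarrow> - gd s t0 \<le> - gd s t"
  proof -
    have c: "continuous_on {a..b} (\<lambda>t. - gd s t)" using gd_cont[OF apos, of b s] by (intro continuous_intros)
    from continuous_attains_inf[OF compact_Icc _ c] ab that show ?thesis by auto
  qed
  define L where "L = - gd s t0"
  have Lpos: "L > 0" unfolding L_def using gd_neg[of t0 s] t0 apos assms by auto
  have "uniformly_continuous_on {a..b} (gd s)"
    by (rule compact_uniformly_continuous[OF gd_cont[OF apos]]) simp
  then have "\<exists>d>0. \<forall>x\<in>{a..b}. \<forall>x'\<in>{a..b}. dist x' x < d \<longrightarrow> dist (gd s x') (gd s x) < L"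
    unfolding uniformly_continuous_on_def using Lpos by blast
  then obtain d where d: "d > 0" "\<And>t u. t \<in> {a..b} \<Longrightarrow> u \<in> {a..b} \<Longrightarrow> dist u t < d \<Longrightarrow> dist (gd s u) (gd s t) < L"
    by blast
  define r where "r = d / 2"
  have uc: "\<And>t u. t \<in> {a..b} \<Longrightarrow> u \<in> {a..b} \<Longrightarrow> \<bar>t - u\<bar> < 2*r \<Longrightarrow> \<bar>gd s t - gd s u\<bar> \<le> L"
  proof -
    fix t u assume tu: "t \<in> {a..b}" "u \<in> {a..b}" "\<bar>t - u\<bar> < 2*r"
    then have "dist t u < d" unfolding r_def dist_real_def by simp
    then have "\<bar>gd s t - gd s u\<bar> < L" using d(2)[OF tu(2) tu(1)] by (simp add: dist_real_def)
    then show "\<bar>gd s t - gd s u\<bar> \<le> L" by simp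
  qed
  define T where "T = {q :: pt \<times> real. \<bar>fst (fst q) - fst (snd (fst q))\<bar> < r \<and>
     \<bar>fst (snd (fst q)) - snd (snd (fst q))\<bar> < r \<and> \<bar>snd (snd (fst q)) - fst (fst q)\<bar> < r}"
  define U where "U = CsetJ s {\<mu>s..\<mu>1} \<inter> T"
  define \<delta> where "\<delta> = 3 / (2 * sqrt 3) * (\<mu>s * (L / 2))"
  have rpos: "r > 0" unfolding r_def using d by simp
  show "\<exists>\<delta> > 0. \<exists>U.
           openin (top_of_set (CsetJ s {\<mu>s..\<mu>1})) U \<and>
           (diag \<times> {\<mu>s..\<mu>1}) \<inter> CsetJ s {\<mu>s..\<mu>1} \<subseteq> U \<and>
           (\<forall>p \<mu>. (p, \<mu>) \<in> U - diag \<times> {\<mu>s..\<mu>1} \<longrightarrow>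
                    dtheta p (repr_field s \<mu> p) \<ge> \<delta>)"
  proof (intro exI[of _ \<delta>] exI[of _ U] conjI allI impI)
    show "\<delta> > 0" unfolding \<delta>_def using assms Lpos by simp
    show "openin (top_of_set (CsetJ s {\<mu>s..\<mu>1})) U"
      unfolding U_def T_def by (intro openin_open_Int open_T)
    show "(diag \<times> {\<mu>s..\<mu>1}) \<inter> CsetJ s {\<mu>s..\<mu>1} \<subseteq> U"
      unfolding U_def T_def diag_def using rpos by auto
  next
    fix p \<mu> assume pm: "(p, \<mu>) \<in> U - diag \<times> {\<mu>s..\<mu>1}"
    obtain x y z where p: "p = (x,y,z)" by (cases p) auto
    have mu: "\<mu>s \<le> \<mu>" "\<mu> \<le> \<mu>1" using pm unfolding U_def CsetJ_def by auto
    have nd: "p \<notin> diag" using pm mu by auto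
    have K: "p \<in> Kset s \<mu>" using pm unfolding U_def CsetJ_def Cset_def by auto
    have rr: "\<bar>x - y\<bar> < r" "\<bar>y - z\<bar> < r" "\<bar>z - x\<bar> < r" 
    proof -
      have "(p, \<mu>) \<in> T" using pm unfolding U_def by blast
      then show "\<bar>x - y\<bar> < r" "\<bar>y - z\<bar> < r" "\<bar>z - x\<bar> < r" unfolding T_def p by simp_all
    qed
    have lo: "a \<le> \<mu> / (2 + \<mu> powr s)"
      unfolding a_def using assms mu
      by (intro frac_le) (auto intro!: powr_mono2 add_pos_nonneg)
    have xyz: "x \<in> {a..b}" "y \<in> {a..b}" "z \<in> {a..b}"
      using K lo mu unfolding Kset_def p b_def by auto
    have N: "(z-y)*gg s y + (x-z)*gg s z + (y-x)*gg s x \<ge> L/2 * (x^2+y^2+z^2-x*y-y*z-z*x)"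
      by (rule key[of a b "gg s" "gd s" L r]) (use gg_deriv apos Lpos t0 uc xyz rr in \<open>auto simp: L_def\<close>)
    define Q where "Q = x^2+y^2+z^2-x*y-y*z-z*x"
    have Qe: "Q = ((x-y)^2 + (y-z)^2 + (z-x)^2)/2" unfolding Q_def by (simp add: power2_eq_square algebra_simps)
    have "x \<noteq> y \<or> y \<noteq> z" using nd unfolding p diag_def by auto
    then have "(x-y)^2 + (y-z)^2 > 0" by (auto simp: add_pos_nonneg add_nonneg_pos)
    then have Qpos: "Q > 0" unfolding Qe using aux3[of "(x-y)^2 + (y-z)^2" "(z-x)^2"] by simp
    have ps: "perp_sq (x,y,z) \<noteq> 0" unfolding perp_sq_def using Qpos Q_def by simp
    define NN where "NN = (z-y)*gg s y + (x-z)*gg s z + (y-x)*gg s x"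
    have "\<mu>s * (L/2) * Q \<le> \<mu> * (L/2 * Q)" using mu Lpos Qpos by (simp add: mult_right_mono)
    also have "\<dots> \<le> \<mu> * NN" using N mu assms unfolding NN_def Q_def by (intro mult_left_mono) auto
    finally have "\<mu>s * (L/2) \<le> \<mu> * NN / Q" using Qpos by (simp add: pos_le_divide_eq)
    then have "\<delta> \<le> 3 / (2 * sqrt 3) * (\<mu> * NN / Q)" unfolding \<delta>_def by (intro mult_left_mono) auto
    then show "\<delta> \<le> dtheta p (repr_field s \<mu> p)"
      unfolding p dtheta_eq[OF ps] NN_def Q_def by simp
  qed
qed

end
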